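(* Let $D$ be a smooth irreducible complex projective curve with an action of the dihedral group $D_{2l}=\langle i,j\rangle$ (of order $4l$), where $i,j$ are involutions. Let $C=D/\langle j\rangle$ and let $\beta\in\mathrm{Aut}(C)$ be the automorphism induced by $(ij)^l$. Then $\nu(\beta)=\frac12\big(\nu(i)+\nu((ij)^l)\big)$ if $l$ is odd, and $\nu(\beta)=\frac12\big(\nu(j)+\nu((ij)^l)\big)$ if $l$ is even.
   Context: $\nu(\gamma)$ denotes the number of points fixed by an automorphism $\gamma$. The element $(ij)^l$ is central in $D_{2l}$, so it induces an automorphism of $C=D/\langle j\rangle$. *)

theory Defs
  imports "HOL-Complex_Analysis.Complex_Analysis"
begin

text \<open>A smooth irreducible complex projective curve is modelled (via the classical
equivalence with compact connected Riemann surfaces) as a compact connected Hausdorff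
topological space together with a holomorphic atlas.\<close>

definition chart_on :: "'a topology \<Rightarrow> 'a set \<Rightarrow> ('a \<Rightarrow> complex) \<Rightarrow> bool" where
  "chart_on T U \<phi> \<longleftrightarrow> openin T U \<and> open (\<phi> ` U) \<and>
     homeomorphic_map (subtopology T U) (top_of_set (\<phi> ` U)) \<phi>"

definition riemann_surface :: "'a topology \<Rightarrow> ('a set \<times> ('a \<Rightarrow> complex)) set \<Rightarrow> bool" where
  "riemann_surface T A \<longleftrightarrow> Hausdorff_space T \<and> connected_space T \<and> topspace T \<noteq> {} \<and>
     (\<forall>(U,\<phi>)\<in>A. chart_on T U \<phi>) \<and>
     (\<forall>x\<in>topspace T. \<exists>(U,\<phi>)\<in>A. x \<in> U) \<and>
     (\<forall>(U,\<phi>)\<in>A. \<forall>(V,\<psi>)\<in>A. (\<psi> \<circ> inv_into U \<phi>) holomorphic_on (\<phi> ` (U \<inter> V)))"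

definition compact_riemann_surface :: "'a topology \<Rightarrow> ('a set \<times> ('a \<Rightarrow> complex)) set \<Rightarrow> bool" where
  "compact_riemann_surface T A \<longleftrightarrow> riemann_surface T A \<and> compact_space T"

definition holomorphic_self_map :: "'a topology \<Rightarrow> ('a set \<times> ('a \<Rightarrow> complex)) set \<Rightarrow> ('a \<Rightarrow> 'a) \<Rightarrow> bool" where
  "holomorphic_self_map T A f \<longleftrightarrow> continuous_map T T f \<and>
     (\<forall>(U,\<phi>)\<in>A. \<forall>(V,\<psi>)\<in>A. (\<psi> \<circ> f \<circ> inv_into U \<phi>) holomorphic_on (\<phi> ` {x\<in>U. f x \<in> V}))"

definition curve_automorphism :: "'a topology \<Rightarrow> ('a set \<times> ('a \<Rightarrow> complex)) set \<Rightarrow> ('a \<Rightarrow> 'a) \<Rightarrow> bool" where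
  "curve_automorphism T A f \<longleftrightarrow> bij_betw f (topspace T) (topspace T) \<and>
     holomorphic_self_map T A f \<and> holomorphic_self_map T A (inv_into (topspace T) f)"

definition map_eq_on :: "'a topology \<Rightarrow> ('a \<Rightarrow> 'a) \<Rightarrow> ('a \<Rightarrow> 'a) \<Rightarrow> bool" where
  "map_eq_on T f g \<longleftrightarrow> (\<forall>x\<in>topspace T. f x = g x)"

definition nu :: "'a topology \<Rightarrow> ('a \<Rightarrow> 'a) \<Rightarrow> nat" where
  "nu T g = card {x \<in> topspace T. g x = x}"

text \<open>Points of the quotient curve D / <j> (j an involution) are the orbits {x, j x}.\<close>
definition quot_points :: "'a topology \<Rightarrow> ('a \<Rightarrow> 'a) \<Rightarrow> 'a set set" where
  "quot_points T j = (\<lambda>x. {x, j x}) ` topspace T"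

text \<open>Number of fixed points of the automorphism of D / <j> induced by c
  (c commuting with j): orbits P with c ` P = P.\<close>
definition nu_quot :: "'a topology \<Rightarrow> ('a \<Rightarrow> 'a) \<Rightarrow> ('a \<Rightarrow> 'a) \<Rightarrow> nat" where
  "nu_quot T j c = card {P \<in> quot_points T j. c ` P = P}"

end

theory Submission
  imports Defs
begin


lemma chart_basic:
  assumes "chart_on T U \<phi>"
  shows "openin T U" "U \<subseteq> topspace T" "inj_on \<phi> U" "open (\<phi> ` U)"
proof -
  show o: "openin T U" using assms by (simp add: chart_on_def)
  show s: "U \<subseteq> topspace T" using openin_subset[OF o] .
  show "open (\<phi> ` U)" using assms by (simp add: chart_on_def)
  have "homeomorphic_map (subtopology T U) (top_of_set (\<phi> ` U)) \<phi>"
    using assms by (simp add: chart_on_def)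
  from homeomorphic_imp_injective_map[OF this]
  have "inj_on \<phi> (topspace (subtopology T U))" .
  then show "inj_on \<phi> U" using s by (simp add: Int_absorb1)
qed

lemma chart_open_image:
  assumes c: "chart_on T U \<phi>" and W: "openin T W" "W \<subseteq> U"
  shows "open (\<phi> ` W)"
proof -
  have h: "homeomorphic_map (subtopology T U) (top_of_set (\<phi> ` U)) \<phi>"
    using c by (simp add: chart_on_def)
  have "openin (subtopology T U) W"
    using W unfolding openin_subtopology by blast
  moreover have "W \<subseteq> topspace (subtopology T U)"
    using W openin_subset by fastforce
  ultimately have "openin (top_of_set (\<phi> ` U)) (\<phi> ` W)"
    using homeomorphic_map_openness[OF h] by blast
  then show ?thesis using chart_basic(4)[OF c] openin_open_trans by blast
qed

lemma chart_preimage_open: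
  assumes c: "chart_on T U \<phi>" and B: "open B"
  shows "openin T {x\<in>U. \<phi> x \<in> B}"
proof -
  have h: "continuous_map (subtopology T U) (top_of_set (\<phi> ` U)) \<phi>"
    using c by (simp add: chart_on_def homeomorphic_imp_continuous_map)
  have "openin (top_of_set (\<phi> ` U)) (\<phi> ` U \<inter> B)"
    using B by (simp add: openin_open_Int)
  then have "openin (subtopology T U) {x \<in> topspace (subtopology T U). \<phi> x \<in> \<phi> ` U \<inter> B}"
    using openin_continuous_map_preimage[OF h] by blast
  moreover have "{x \<in> topspace (subtopology T U). \<phi> x \<in> \<phi> ` U \<inter> B} = {x\<in>U. \<phi> x \<in> B}"
    using chart_basic(2)[OF c] by auto
  ultimately show ?thesis using openin_trans_full chart_basic(1)[OF c] by metis
qed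

lemma rs_facts:
  assumes "riemann_surface T A"
  shows "Hausdorff_space T" "connected_space T"
    "\<And>U \<phi>. (U,\<phi>) \<in> A \<Longrightarrow> chart_on T U \<phi>"
    "\<And>x. x \<in> topspace T \<Longrightarrow> \<exists>U \<phi>. (U,\<phi>) \<in> A \<and> x \<in> U"
    "\<And>U \<phi> V \<psi>. (U,\<phi>) \<in> A \<Longrightarrow> (V,\<psi>) \<in> A \<Longrightarrow> (\<psi> \<circ> inv_into U \<phi>) holomorphic_on (\<phi> ` (U \<inter> V))"
proof -
  show "Hausdorff_space T" "connected_space T" using assms by (auto simp: riemann_surface_def)
  have h1: "\<forall>(U,\<phi>)\<in>A. chart_on T U \<phi>" using assms by (simp add: riemann_surface_def)
  then show "\<And>U \<phi>. (U,\<phi>) \<in> A \<Longrightarrow> chart_on T U \<phi>" by fastforce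
  have h2: "\<forall>x\<in>topspace T. \<exists>(U,\<phi>)\<in>A. x \<in> U" using assms by (simp add: riemann_surface_def)
  then show "\<And>x. x \<in> topspace T \<Longrightarrow> \<exists>U \<phi>. (U,\<phi>) \<in> A \<and> x \<in> U" by fastforce
  have h3: "\<forall>(U,\<phi>)\<in>A. \<forall>(V,\<psi>)\<in>A. (\<psi> \<circ> inv_into U \<phi>) holomorphic_on (\<phi> ` (U \<inter> V))"
    using assms by (simp add: riemann_surface_def)
  show "\<And>U \<phi> V \<psi>. (U,\<phi>) \<in> A \<Longrightarrow> (V,\<psi>) \<in> A \<Longrightarrow> (\<psi> \<circ> inv_into U \<phi>) holomorphic_on (\<phi> ` (U \<inter> V))"
  proof -
    fix U \<phi> V \<psi> assume a: "(U,\<phi>) \<in> A" "(V,\<psi>) \<in> A"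
    from bspec[OF h3 a(1)] have "\<forall>(V,\<psi>)\<in>A. (\<psi> \<circ> inv_into U \<phi>) holomorphic_on (\<phi> ` (U \<inter> V))" by simp
    from bspec[OF this a(2)] show "(\<psi> \<circ> inv_into U \<phi>) holomorphic_on (\<phi> ` (U \<inter> V))" by simp
  qed
qed

lemma hsm_facts:
  assumes "holomorphic_self_map T A f"
  shows "continuous_map T T f"
    "\<And>U \<phi> V \<psi>. (U,\<phi>) \<in> A \<Longrightarrow> (V,\<psi>) \<in> A \<Longrightarrow> (\<psi> \<circ> f \<circ> inv_into U \<phi>) holomorphic_on (\<phi> ` {x\<in>U. f x \<in> V})"
proof -
  show "continuous_map T T f" using assms by (simp add: holomorphic_self_map_def)
  have h3: "\<forall>(U,\<phi>)\<in>A. \<forall>(V,\<psi>)\<in>A. (\<psi> \<circ> f \<circ> inv_into U \<phi>) holomorphic_on (\<phi> ` {x\<in>U. f x \<in> V})"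
    using assms by (simp add: holomorphic_self_map_def)
  show "\<And>U \<phi> V \<psi>. (U,\<phi>) \<in> A \<Longrightarrow> (V,\<psi>) \<in> A \<Longrightarrow> (\<psi> \<circ> f \<circ> inv_into U \<phi>) holomorphic_on (\<phi> ` {x\<in>U. f x \<in> V})"
  proof -
    fix U \<phi> V \<psi> assume a: "(U,\<phi>) \<in> A" "(V,\<psi>) \<in> A"
    from bspec[OF h3 a(1)] have "\<forall>(V,\<psi>)\<in>A. (\<psi> \<circ> f \<circ> inv_into U \<phi>) holomorphic_on (\<phi> ` {x\<in>U. f x \<in> V})" by simp
    from bspec[OF this a(2)] show "(\<psi> \<circ> f \<circ> inv_into U \<phi>) holomorphic_on (\<phi> ` {x\<in>U. f x \<in> V})" by simp
  qed
qed

lemma local_identity: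
  assumes rs: "riemann_surface T A" and hf: "holomorphic_self_map T A f"
    and x: "x \<in> T derived_set_of {y\<in>topspace T. f y = y}"
  shows "\<exists>N. openin T N \<and> x \<in> N \<and> (\<forall>y\<in>N. f y = y)"
proof -
  let ?F = "{y\<in>topspace T. f y = y}"
  have cf: "continuous_map T T f" using hsm_facts[OF hf] by blast
  have H: "Hausdorff_space T" using rs_facts[OF rs] by blast
  have "closedin T ?F"
    using closedin_continuous_maps_eq[OF H cf continuous_map_id] by simp
  then have "T derived_set_of ?F \<subseteq> ?F" by (simp add: closedin_contains_derived_set)
  then have xF: "x \<in> ?F" using x by (rule subsetD)
  obtain U \<phi> where UA: "(U,\<phi>) \<in> A" and xU: "x \<in> U"
    using rs_facts(4)[OF rs] xF by blast
  have c: "chart_on T U \<phi>" using rs_facts(3)[OF rs] UA by blast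
  note cb = chart_basic[OF c]
  define W where "W = {y\<in>U. f y \<in> U}"
  have "openin T W"
    unfolding W_def using openin_continuous_map_preimage_gen[OF cf cb(1) cb(1)] .
  then have oW: "open (\<phi> ` W)" using chart_open_image[OF c] W_def by auto
  have xW: "x \<in> W" using xF xU W_def by auto
  define g where "g = \<phi> \<circ> f \<circ> inv_into U \<phi>"
  have hg: "g holomorphic_on \<phi> ` W"
    using hsm_facts(2)[OF hf UA UA] unfolding g_def W_def .
  obtain e where e: "e > 0" "ball (\<phi> x) e \<subseteq> \<phi> ` W"
    using oW xW open_contains_ball by blast
  define N where "N = {y\<in>U. \<phi> y \<in> ball (\<phi> x) e}"
  have oN: "openin T N" unfolding N_def by (rule chart_preimage_open[OF c open_ball])
  have xN: "x \<in> N" using xU e N_def by simp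
  have gy: "g (\<phi> y) = \<phi> (f y)" if "y \<in> U" for y
    using that cb(3) by (simp add: g_def)
  have lim: "\<phi> x islimpt \<phi> ` (?F \<inter> N)"
  proof (rule islimptI)
    fix t assume t: "\<phi> x \<in> t" "open t"
    define N' where "N' = {y\<in>N. \<phi> y \<in> t}"
    have oN': "openin T N'"
    proof -
      have "openin T {y\<in>U. \<phi> y \<in> ball (\<phi> x) e \<inter> t}"
        by (rule chart_preimage_open[OF c open_Int[OF open_ball t(2)]])
      moreover have "{y\<in>U. \<phi> y \<in> ball (\<phi> x) e \<inter> t} = N'"
        by (auto simp: N_def N'_def)
      ultimately show ?thesis by simp
    qed
    have xN': "x \<in> N'" using xN t by (simp add: N'_def)
    have C: "\<forall>T'. x \<in> T' \<and> openin T T' \<longrightarrow> (\<exists>y\<noteq>x. y \<in> ?F \<and> y \<in> T')"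
      using x unfolding derived_set_of_def mem_Collect_eq by (rule conjunct2)
    have "\<exists>y\<noteq>x. y \<in> ?F \<and> y \<in> N'"
      using C[THEN spec[of _ N'], THEN mp, OF conjI[OF xN' oN']] .
    then obtain y where y: "y \<noteq> x" "y \<in> ?F" "y \<in> N'"
      by blast
    then have y3: "y \<in> {y\<in>N. \<phi> y \<in> t}" by (simp add: N'_def)
    have "y \<in> U" using y3 N_def by simp
    then have "\<phi> y \<noteq> \<phi> x" using y(1) xU inj_onD[OF cb(3)] by blast
    moreover have yN: "y \<in> ?F \<inter> N" using y(2) y3 by simp
    moreover have "\<phi> y \<in> t" using y3 by simp
    ultimately show "\<exists>z\<in>\<phi> ` (?F \<inter> N). z \<in> t \<and> z \<noteq> \<phi> x"
      by (intro bexI[OF _ imageI[OF yN]]) simp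
  qed
  have gid: "g z = z" if z: "z \<in> ball (\<phi> x) e" for z
  proof -
    have "g z - z = 0"
    proof (rule analytic_continuation[where f="\<lambda>z. g z - z" and w=z and S="ball (\<phi> x) e" and U="\<phi> ` (?F \<inter> N)" and \<xi>="\<phi> x"])
      have "g holomorphic_on ball (\<phi> x) e" using holomorphic_on_subset[OF hg e(2)] .
      then show "(\<lambda>z. g z - z) holomorphic_on ball (\<phi> x) e"
        by (intro holomorphic_intros)
      show "\<phi> ` (?F \<inter> N) \<subseteq> ball (\<phi> x) e" by (auto simp: N_def)
      show "\<phi> x \<in> ball (\<phi> x) e" using e by simp
      show "\<phi> x islimpt \<phi> ` (?F \<inter> N)" by (rule lim)
      show "g w - w = 0" if wi: "w \<in> \<phi> ` (?F \<inter> N)" for w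
      proof -
        obtain y where "y \<in> ?F" "y \<in> N" "w = \<phi> y" using wi by blast
        moreover then have "y \<in> U" using N_def by simp
        ultimately show ?thesis using gy by simp
      qed
    qed (use z in auto)
    then show ?thesis by simp
  qed
  have "\<forall>y\<in>N. f y = y"
  proof
    fix y assume y: "y \<in> N"
    then have yU: "y \<in> U" and "\<phi> y \<in> \<phi> ` W" using e N_def by auto
    then obtain w where w: "w \<in> W" "\<phi> w = \<phi> y" by auto
    then have "w = y" using yU W_def inj_onD[OF cb(3)] by blast
    with w have "y \<in> W" by simp
    then have "\<phi> (f y) = \<phi> y" using gid[of "\<phi> y"] gy y N_def by auto
    moreover have "f y \<in> U" using \<open>y \<in> W\<close> W_def by simp
    ultimately show "f y = y" using yU inj_onD[OF cb(3)] by blast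
  qed
  then show ?thesis using oN xN by blast
qed

lemma identity_thm:
  assumes crs: "compact_riemann_surface T A" and hf: "holomorphic_self_map T A f"
    and inf: "infinite {y\<in>topspace T. f y = y}"
  shows "\<forall>x\<in>topspace T. f x = x"
proof -
  have rs: "riemann_surface T A" and cs: "compact_space T"
    using crs by (auto simp: compact_riemann_surface_def)
  let ?F = "{y\<in>topspace T. f y = y}"
  define Z where "Z = {x\<in>topspace T. \<exists>N. openin T N \<and> x \<in> N \<and> (\<forall>y\<in>N. f y = y)}"
  have oZ: "openin T Z"
    unfolding openin_subopen[of T Z]
  proof
    fix x assume "x \<in> Z"
    then obtain N where N: "openin T N" "x \<in> N" "\<forall>y\<in>N. f y = y" by (auto simp: Z_def)
    then have "N \<subseteq> Z" using openin_subset unfolding Z_def by blast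
    then show "\<exists>T'. openin T T' \<and> x \<in> T' \<and> T' \<subseteq> Z" using N by blast
  qed
  have ZF: "Z \<subseteq> ?F" unfolding Z_def by blast
  have loc: "x \<in> Z" if "x \<in> T derived_set_of ?F" for x
    using local_identity[OF rs hf that] that unfolding Z_def derived_set_of_def by blast
  have cZ: "closedin T Z"
    unfolding closedin_contains_derived_set
    using loc derived_set_of_mono[OF ZF] Z_def by blast
  obtain x0 where "x0 \<in> T derived_set_of ?F"
    using compact_space_imp_Bolzano_Weierstrass[OF cs inf] by blast
  then have "Z \<noteq> {}" using loc by blast
  then have "Z = topspace T"
    using rs_facts(2)[OF rs] oZ cZ unfolding connected_space_clopen_in by blast
  then show ?thesis using ZF by blast
qed



lemma hsm_intro:
  assumes "continuous_map T T f"
    and "\<And>U \<phi> V \<psi>. (U,\<phi>) \<in> A \<Longrightarrow> (V,\<psi>) \<in> A \<Longrightarrow> (\<psi> \<circ> f \<circ> inv_into U \<phi>) holomorphic_on (\<phi> ` {x\<in>U. f x \<in> V})"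
  shows "holomorphic_self_map T A f"
  using assms unfolding holomorphic_self_map_def by auto

lemma hsm_id:
  assumes rs: "riemann_surface T A"
  shows "holomorphic_self_map T A id"
proof (rule hsm_intro[OF continuous_map_id])
  fix U \<phi> V \<psi> assume a: "(U,\<phi>) \<in> A" "(V,\<psi>) \<in> A"
  have "{x\<in>U. id x \<in> V} = U \<inter> V" by auto
  then show "(\<psi> \<circ> id \<circ> inv_into U \<phi>) holomorphic_on (\<phi> ` {x\<in>U. id x \<in> V})"
    using rs_facts(5)[OF rs a] by simp
qed

lemma hsm_comp:
  assumes rs: "riemann_surface T A" and hf: "holomorphic_self_map T A f"
    and hg: "holomorphic_self_map T A g"
  shows "holomorphic_self_map T A (f \<circ> g)"
proof (rule hsm_intro)
  have cf: "continuous_map T T f" and cg: "continuous_map T T g"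
    using hsm_facts(1) hf hg by auto
  show "continuous_map T T (f \<circ> g)" using continuous_map_compose[OF cg cf] .
  fix U \<phi> V \<psi> assume UA: "(U,\<phi>) \<in> A" and VA: "(V,\<psi>) \<in> A"
  have c: "chart_on T U \<phi>" using rs_facts(3)[OF rs UA] .
  note cb = chart_basic[OF c]
  define D where "D = (\<lambda>p::'a set \<times> ('a \<Rightarrow> complex). {x\<in>U. g x \<in> fst p \<and> f (g x) \<in> V})"
  let ?F = "\<psi> \<circ> (f \<circ> g) \<circ> inv_into U \<phi>"
  have loc: "?F holomorphic_on \<phi> ` D p \<and> open (\<phi> ` D p)" if pA: "p \<in> A" for p
  proof -
    obtain W ch where p: "p = (W,ch)" by (cases p)
    have WA: "(W,ch) \<in> A" using pA p by simp
    have cw: "chart_on T W ch" using rs_facts(3)[OF rs WA] .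
    note cwb = chart_basic[OF cw]
    have o1: "openin T {x\<in>U. g x \<in> W}"
      using openin_continuous_map_preimage_gen[OF cg cb(1) cwb(1)] .
    have o2: "openin T {x\<in>{x\<in>U. g x \<in> W}. (f \<circ> g) x \<in> V}"
      using openin_continuous_map_preimage_gen[OF continuous_map_compose[OF cg cf] o1 chart_basic(1)[OF rs_facts(3)[OF rs VA]]] .
    have Dp: "D p = {x\<in>{x\<in>U. g x \<in> W}. (f \<circ> g) x \<in> V}" by (auto simp: D_def p)
    have oD: "open (\<phi> ` D p)"
      using chart_open_image[OF c] o2 unfolding Dp by auto
    define h1 where "h1 = ch \<circ> g \<circ> inv_into U \<phi>"
    define h2 where "h2 = \<psi> \<circ> f \<circ> inv_into W ch"
    have hh1: "h1 holomorphic_on \<phi> ` {x\<in>U. g x \<in> W}"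
      unfolding h1_def using hsm_facts(2)[OF hg UA WA] .
    have hh2: "h2 holomorphic_on ch ` {w\<in>W. f w \<in> V}"
      unfolding h2_def using hsm_facts(2)[OF hf WA VA] .
    have sub: "\<phi> ` D p \<subseteq> \<phi> ` {x\<in>U. g x \<in> W}" by (auto simp: D_def p)
    have inv1: "inv_into U \<phi> (\<phi> x) = x" if "x \<in> U" for x
      using inv_into_f_f[OF cb(3) that] .
    have inv2: "inv_into W ch (ch w) = w" if "w \<in> W" for w
      using inv_into_f_f[OF cwb(3) that] .
    have img: "h1 ` (\<phi> ` D p) \<subseteq> ch ` {w\<in>W. f w \<in> V}"
    proof
      fix z assume "z \<in> h1 ` (\<phi> ` D p)"
      then obtain x where x: "x \<in> D p" "z = h1 (\<phi> x)" by blast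
      then have "x \<in> U" "g x \<in> W" "f (g x) \<in> V" by (auto simp: D_def p)
      then show "z \<in> ch ` {w\<in>W. f w \<in> V}" using x inv1 by (auto simp: h1_def)
    qed
    have hc: "(h2 \<circ> h1) holomorphic_on \<phi> ` D p"
      using holomorphic_on_compose_gen[OF holomorphic_on_subset[OF hh1 sub] hh2 img] .
    have eq: "(h2 \<circ> h1) z = ?F z" if zi: "z \<in> \<phi> ` D p" for z
    proof -
      obtain x where x: "x \<in> D p" "z = \<phi> x" using zi by blast
      then have "x \<in> U" "g x \<in> W" by (auto simp: D_def p)
      then show ?thesis using x inv1 inv2 by (simp add: h1_def h2_def)
    qed
    show ?thesis using holomorphic_transform[OF hc eq] oD by blast
  qed
  have "?F holomorphic_on (\<Union>p\<in>A. \<phi> ` D p)"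
    by (rule holomorphic_on_UN_open) (use loc in auto)
  moreover have "\<phi> ` {x\<in>U. (f \<circ> g) x \<in> V} \<subseteq> (\<Union>p\<in>A. \<phi> ` D p)"
  proof
    fix z assume "z \<in> \<phi> ` {x\<in>U. (f \<circ> g) x \<in> V}"
    then obtain x where x: "x \<in> U" "f (g x) \<in> V" "z = \<phi> x" by auto
    have "g x \<in> topspace T" using cg x(1) cb(2) continuous_map_image_subset_topspace by blast
    then obtain W ch where W: "(W,ch) \<in> A" "g x \<in> W" using rs_facts(4)[OF rs] by blast
    then have "x \<in> D (W,ch)" using x by (simp add: D_def)
    then show "z \<in> (\<Union>p\<in>A. \<phi> ` D p)" using W x(3) by blast
  qed
  ultimately show "?F holomorphic_on \<phi> ` {x\<in>U. (f \<circ> g) x \<in> V}"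
    by (rule holomorphic_on_subset)
qed

lemma hsm_funpow:
  assumes rs: "riemann_surface T A" and hf: "holomorphic_self_map T A f"
  shows "holomorphic_self_map T A (f ^^ n)"
proof (induction n)
  case 0 then show ?case using hsm_id[OF rs] by (simp add: id_def)
next
  case (Suc n) then show ?case using hsm_comp[OF rs hf Suc] by (simp only: funpow.simps)
qed



lemma fp_closed:
  assumes "\<forall>x\<in>X. f x \<in> X" "x \<in> X" shows "(f ^^ n) x \<in> X"
  using assms by (induction n) auto

lemma fp_cancel:
  assumes iX: "\<forall>x\<in>X. i x \<in> X" and jX: "\<forall>x\<in>X. j x \<in> X"
    and ii: "\<forall>x\<in>X. i (i x) = x" and jj: "\<forall>x\<in>X. j (j x) = x"
  shows "x \<in> X \<Longrightarrow> ((j \<circ> i) ^^ n) (((i \<circ> j) ^^ n) x) = x"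
proof (induction n arbitrary: x)
  case 0 then show ?case by simp
next
  case (Suc n)
  have rX: "((i \<circ> j) ^^ n) x \<in> X" using fp_closed[of X "i \<circ> j"] iX jX Suc.prems by auto
  have "((j \<circ> i) ^^ Suc n) (((i \<circ> j) ^^ Suc n) x)
      = ((j \<circ> i) ^^ n) (j (i (i (j (((i \<circ> j) ^^ n) x)))))"
  proof -
    have A: "(i \<circ> j) ^^ Suc n = (i \<circ> j) \<circ> (i \<circ> j) ^^ n" by (rule funpow.simps(2))
    have B: "(j \<circ> i) ^^ Suc n = (j \<circ> i) ^^ n \<circ> (j \<circ> i)" by (rule funpow_Suc_right)
    show ?thesis by (simp only: A B comp_apply)
  qed
  also have "\<dots> = ((j \<circ> i) ^^ n) (((i \<circ> j) ^^ n) x)" using rX ii jj jX by simp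
  also have "\<dots> = x" by (rule Suc.IH[OF Suc.prems])
  finally show ?case .
qed

lemma fp_comm:
  assumes "x \<in> X"
  shows "j (((i \<circ> j) ^^ n) x) = ((j \<circ> i) ^^ n) (j x)"
  by (induction n) auto

lemma card_conj:
  assumes gX: "\<forall>x\<in>X. g x \<in> X" and g'X: "\<forall>x\<in>X. g' x \<in> X"
    and g'g: "\<forall>x\<in>X. g' (g x) = x" and gg': "\<forall>x\<in>X. g (g' x) = x"
    and hX: "\<forall>x\<in>X. h x \<in> X"
  shows "card {x\<in>X. g' (h (g x)) = x} = card {y\<in>X. h y = y}"
    "finite {x\<in>X. g' (h (g x)) = x} \<longleftrightarrow> finite {y\<in>X. h y = y}"
proof -
  have b: "bij_betw g {x\<in>X. g' (h (g x)) = x} {y\<in>X. h y = y}"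
  proof (rule bij_betw_byWitness[where f'=g'])
    show "\<forall>a\<in>{x\<in>X. g' (h (g x)) = x}. g' (g a) = a" using g'g by auto
    show "\<forall>a\<in>{y\<in>X. h y = y}. g (g' a) = a" using gg' by auto
    show "g ` {x\<in>X. g' (h (g x)) = x} \<subseteq> {y\<in>X. h y = y}"
    proof
      fix y assume "y \<in> g ` {x\<in>X. g' (h (g x)) = x}"
      then obtain x where x: "x \<in> X" "g' (h (g x)) = x" "y = g x" by blast
      have "h (g x) = g (g' (h (g x)))" using gg' hX gX x(1) by simp
      then show "y \<in> {y\<in>X. h y = y}" using x gX by simp
    qed
    show "g' ` {y\<in>X. h y = y} \<subseteq> {x\<in>X. g' (h (g x)) = x}"
    proof
      fix x assume "x \<in> g' ` {y\<in>X. h y = y}"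
      then obtain y where y: "y \<in> X" "h y = y" "x = g' y" by blast
      then show "x \<in> {x\<in>X. g' (h (g x)) = x}" using gg' g'X by simp
    qed
  qed
  show "card {x\<in>X. g' (h (g x)) = x} = card {y\<in>X. h y = y}" using bij_betw_same_card[OF b] .
  show "finite {x\<in>X. g' (h (g x)) = x} \<longleftrightarrow> finite {y\<in>X. h y = y}" using bij_betw_finite[OF b] .
qed

lemma sum_ind:
  assumes "finite S"
  shows "(\<Sum>x\<in>S. if P x then 1 else 0::real) = real (card {x\<in>S. P x})"
  using assms by (simp add: sum.inter_filter[symmetric])

lemma orbit_count:
  assumes jX: "\<forall>x\<in>X. j x \<in> X" and jj: "\<forall>x\<in>X. j (j x) = x"
    and cX: "\<forall>x\<in>X. c x \<in> X" and jc: "\<forall>x\<in>X. j (c x) = c (j x)"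
    and f1: "finite {x\<in>X. c x = x}" and f2: "finite {x\<in>X. j (c x) = x}"
  shows "real (card {P \<in> (\<lambda>x. {x, j x}) ` X. c ` P = P})
     = (real (card {x\<in>X. c x = x}) + real (card {x\<in>X. j (c x) = x})) / 2"
proof -
  define h where "h = (\<lambda>x. {x, j x})"
  define S where "S = {x\<in>X. c x = x \<or> j (c x) = x}"
  have fS: "finite S"
  proof -
    have "S = {x\<in>X. c x = x} \<union> {x\<in>X. j (c x) = x}" by (auto simp: S_def)
    then show ?thesis using f1 f2 by simp
  qed
  have Sj: "j x \<in> S" if "x \<in> S" for x
  proof -
    have xX: "x \<in> X" using that S_def by simp
    have "c x = x \<or> j (c x) = x" using that S_def by simp
    then have "c (j x) = j x \<or> j (c (j x)) = j x"
    proof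
      assume a: "c x = x"
      have "c (j x) = j x" using jc xX a by metis
      then show ?thesis by simp
    next
      assume a: "j (c x) = x"
      then have cx: "c x = j x" using jj cX xX by (metis)
      have "c (j x) = j (c x)" using jc xX by metis
      then have "j (c (j x)) = c x" using jj cX xX by simp
      then show ?thesis using cx by simp
    qed
    then show ?thesis using jX xX by (simp add: S_def)
  qed
  have orb: "{P \<in> h ` X. c ` P = P} = h ` S"
  proof
    show "{P \<in> h ` X. c ` P = P} \<subseteq> h ` S"
    proof
      fix P assume "P \<in> {P \<in> h ` X. c ` P = P}"
      then obtain x where x: "x \<in> X" "P = {x, j x}" "c ` P = P" by (auto simp: h_def)
      then have "c x \<in> {x, j x}" by blast
      then have "c x = x \<or> j (c x) = x" using jj x(1) by auto
      then have "x \<in> S" using x(1) S_def by simp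
      then show "P \<in> h ` S" using x(2) h_def by simp
    qed
    show "h ` S \<subseteq> {P \<in> h ` X. c ` P = P}"
    proof
      fix P assume "P \<in> h ` S"
      then obtain x where x: "x \<in> S" "P = {x, j x}" by (auto simp: h_def)
      have xX: "x \<in> X" using x(1) S_def by simp
      have cP: "c ` P = {c x, j (c x)}" using x(2) jc xX by simp
      have "c x = x \<or> j (c x) = x" using x(1) S_def by simp
      then have "c ` P = P"
      proof
        assume "c x = x" then show ?thesis using cP x(2) by simp
      next
        assume a: "j (c x) = x"
        then have "c x = j x" using jj cX xX by metis
        then show ?thesis using cP x(2) a by auto
      qed
      then show "P \<in> {P \<in> h ` X. c ` P = P}" using x xX h_def S_def by auto
    qed
  qed
  define g where "g = (\<lambda>x. 1 / real (card (h x)))"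
  have fib: "{x\<in>S. h x = y} = y" if yh: "y \<in> h ` S" for y
  proof -
    obtain x0 where x0: "x0 \<in> S" "y = {x0, j x0}" using yh h_def by auto
    have x0X: "x0 \<in> X" using x0(1) S_def by simp
    show ?thesis
    proof
      show "{x\<in>S. h x = y} \<subseteq> y"
      proof
        fix x assume "x \<in> {x\<in>S. h x = y}"
        then have "{x, j x} = y" by (simp add: h_def)
        then show "x \<in> y" by (metis insertI1)
      qed
      show "y \<subseteq> {x\<in>S. h x = y}"
      proof
        fix x assume "x \<in> y"
        then have "x = x0 \<or> x = j x0" using x0 by simp
        then show "x \<in> {x\<in>S. h x = y}"
        proof
          assume "x = x0" then show ?thesis using x0 h_def by simp
        next
          assume xj: "x = j x0"
          have jS: "j x0 \<in> S" using Sj x0(1) by blast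
          have "j (j x0) = x0" using jj x0X by blast
          then have "h (j x0) = y" using x0(2) by (simp add: h_def insert_commute)
          then show ?thesis using xj jS by simp
        qed
      qed
    qed
  qed
  have "real (card (h ` S)) = (\<Sum>y\<in>h ` S. (1::real))" by simp
  also have "\<dots> = (\<Sum>y\<in>h ` S. sum g {x\<in>S. h x = y})"
  proof (rule sum.cong[OF refl])
    fix y assume yS: "y \<in> h ` S"
    have "sum g {x\<in>S. h x = y} = sum (\<lambda>x. 1 / real (card y)) y"
      unfolding fib[OF yS] using fib[OF yS] by (intro sum.cong) (auto simp: g_def)
    also have "\<dots> = 1"
    proof -
      obtain x0 where "y = {x0, j x0}" using yS h_def by auto
      then have "finite y" "y \<noteq> {}" by auto
      then have "card y > 0" by (simp add: card_gt_0_iff)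
      then show ?thesis by simp
    qed
    finally show "1 = sum g {x\<in>S. h x = y}" by simp
  qed
  also have "\<dots> = sum g S" using sum.image_gen[OF fS, of g h] by simp
  also have "\<dots> = (\<Sum>x\<in>S. ((if c x = x then 1 else 0) + (if j (c x) = x then 1 else 0)) / 2)"
  proof (rule sum.cong[OF refl])
    fix x assume xS: "x \<in> S"
    have xX: "x \<in> X" using xS S_def by simp
    have d: "c x = x \<or> j (c x) = x" using xS S_def by simp
    show "g x = ((if c x = x then 1 else 0) + (if j (c x) = x then 1 else 0)) / 2"
    proof (cases "j x = x")
      case True
      then have "j (c x) = c x" using jc xX by simp
      then have "c x = x" "j (c x) = x" using d by auto
      then show ?thesis using True by (simp add: g_def h_def)
    next
      case False
      then have "card (h x) = 2" by (simp add: h_def)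
      moreover have "\<not> (c x = x \<and> j (c x) = x)" using False by auto
      ultimately show ?thesis using d by (auto simp: g_def)
    qed
  qed
  also have "\<dots> = ((\<Sum>x\<in>S. if c x = x then 1 else 0) + (\<Sum>x\<in>S. if j (c x) = x then 1 else 0)) / 2"
    by (simp add: sum_divide_distrib[symmetric] sum.distrib)
  also have "\<dots> = (real (card {x\<in>S. c x = x}) + real (card {x\<in>S. j (c x) = x})) / 2"
    using sum_ind[OF fS] by simp
  also have "{x\<in>S. c x = x} = {x\<in>X. c x = x}" by (auto simp: S_def)
  also have "{x\<in>S. j (c x) = x} = {x\<in>X. j (c x) = x}" by (auto simp: S_def)
  finally show ?thesis using orb h_def by simp
qed



theorem lemma5p4:
  fixes T :: "'a topology" and A :: "('a set \<times> ('a \<Rightarrow> complex)) set"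
    and i j :: "'a \<Rightarrow> 'a" and l :: nat
  assumes curve: "compact_riemann_surface T A"
    and l_pos: "l \<ge> 1"
    and aut_i: "curve_automorphism T A i"
    and aut_j: "curve_automorphism T A j"
    and i_nonid: "\<not> map_eq_on T i id" and i_inv: "map_eq_on T (i \<circ> i) id"
    and j_nonid: "\<not> map_eq_on T j id" and j_inv: "map_eq_on T (j \<circ> j) id"
    and ij_pow: "map_eq_on T ((i \<circ> j) ^^ (2 * l)) id"
    and ij_order: "\<forall>k. 0 < k \<and> k < 2 * l \<longrightarrow> \<not> map_eq_on T ((i \<circ> j) ^^ k) id"
  shows "(odd l \<longrightarrow> real (nu_quot T j ((i \<circ> j) ^^ l))
            = (real (nu T i) + real (nu T ((i \<circ> j) ^^ l))) / 2)
       \<and> (even l \<longrightarrow> real (nu_quot T j ((i \<circ> j) ^^ l))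
            = (real (nu T j) + real (nu T ((i \<circ> j) ^^ l))) / 2)"
proof -
  define X where "X = topspace T"
  define r where "r = i \<circ> j"
  define s where "s = j \<circ> i"
  define c where "c = r ^^ l"
  have rs: "riemann_surface T A" using curve by (simp add: compact_riemann_surface_def)
  have hi: "holomorphic_self_map T A i" and hj: "holomorphic_self_map T A j"
    using aut_i aut_j by (auto simp: curve_automorphism_def)
  have iX: "\<forall>x\<in>X. i x \<in> X" and jX: "\<forall>x\<in>X. j x \<in> X"
    using aut_i aut_j unfolding curve_automorphism_def X_def by (auto dest: bij_betw_apply)
  have ii: "\<forall>x\<in>X. i (i x) = x" and jj: "\<forall>x\<in>X. j (j x) = x"
    using i_inv j_inv by (auto simp: map_eq_on_def X_def)
  have rX: "\<forall>x\<in>X. (r ^^ n) x \<in> X" for n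
    using fp_closed[of X r] iX jX by (auto simp: r_def)
  have sX: "\<forall>x\<in>X. (s ^^ n) x \<in> X" for n
    using fp_closed[of X s] iX jX by (auto simp: s_def)
  have sr: "\<forall>x\<in>X. (s ^^ n) ((r ^^ n) x) = x" for n
    using fp_cancel[OF iX jX ii jj] by (simp add: r_def s_def)
  have rs': "\<forall>x\<in>X. (r ^^ n) ((s ^^ n) x) = x" for n
    using fp_cancel[OF jX iX jj ii] by (simp add: r_def s_def)
  have comm: "\<forall>x\<in>X. j ((r ^^ n) x) = (s ^^ n) (j x)" for n
    unfolding r_def s_def using fp_comm[where j=j and i=i and X=X] by blast
  have r2l: "\<forall>x\<in>X. (r ^^ l) ((r ^^ l) x) = x"
  proof
    fix x assume "x \<in> X"
    have "r ^^ (2 * l) = r ^^ l \<circ> r ^^ l" by (simp add: mult_2 funpow_add)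
    then show "(r ^^ l) ((r ^^ l) x) = x" using ij_pow \<open>x \<in> X\<close>
      by (simp add: map_eq_on_def X_def r_def)
  qed
  have cX: "\<forall>x\<in>X. c x \<in> X" using rX by (simp add: c_def)
  have slc: "\<forall>x\<in>X. (s ^^ l) x = c x"
  proof
    fix x assume x: "x \<in> X"
    have "(s ^^ l) x = (s ^^ l) ((r ^^ l) ((r ^^ l) x))" using r2l x by simp
    also have "\<dots> = (r ^^ l) x" using sr rX x by simp
    finally show "(s ^^ l) x = c x" by (simp add: c_def)
  qed
  have jc: "\<forall>x\<in>X. j (c x) = c (j x)"
    using comm slc jX by (simp add: c_def)
  have hr: "holomorphic_self_map T A r"
    unfolding r_def by (rule hsm_comp[OF rs hi hj])
  have hc: "holomorphic_self_map T A c"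
    unfolding c_def by (rule hsm_funpow[OF rs hr])
  have finc: "finite {x\<in>X. c x = x}"
  proof (rule ccontr)
    assume "infinite {x\<in>X. c x = x}"
    then have "infinite {y\<in>topspace T. c y = y}" unfolding X_def .
    then have "\<forall>x\<in>topspace T. c x = x" by (rule identity_thm[OF curve hc])
    then have "map_eq_on T c id" unfolding map_eq_on_def by simp
    then have "map_eq_on T ((i \<circ> j) ^^ l) id" unfolding c_def r_def .
    moreover have "0 < l \<and> l < 2 * l" using l_pos by simp
    ultimately show False using ij_order by blast
  qed
  have key: "real (nu_quot T j ((i \<circ> j) ^^ l)) = (real (nu T h) + real (nu T ((i \<circ> j) ^^ l))) / 2"
    if gX: "\<forall>x\<in>X. g x \<in> X" and g'X: "\<forall>x\<in>X. g' x \<in> X"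
    and g'g: "\<forall>x\<in>X. g' (g x) = x" and gg': "\<forall>x\<in>X. g (g' x) = x"
    and hX: "\<forall>x\<in>X. h x \<in> X" and conj: "\<forall>x\<in>X. j (c x) = g' (h (g x))"
    and hh: "holomorphic_self_map T A h" and hn: "\<not> map_eq_on T h id" for g g' h
  proof -
    have E: "{x\<in>X. j (c x) = x} = {x\<in>X. g' (h (g x)) = x}" using conj by auto
    note cc = card_conj[OF gX g'X g'g gg' hX]
    have finh: "finite {y\<in>X. h y = y}"
    proof (rule ccontr)
      assume "infinite {y\<in>X. h y = y}"
      then have "infinite {y\<in>topspace T. h y = y}" unfolding X_def .
      then have "\<forall>x\<in>topspace T. h x = x" by (rule identity_thm[OF curve hh])
      then show False using hn by (simp add: map_eq_on_def)
    qed
    have fin2: "finite {x\<in>X. j (c x) = x}" using E cc(2) finh by simp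
    have "real (card {P \<in> (\<lambda>x. {x, j x}) ` X. c ` P = P})
      = (real (card {x\<in>X. c x = x}) + real (card {x\<in>X. j (c x) = x})) / 2"
      by (rule orbit_count[OF jX jj cX jc finc fin2])
    also have "card {x\<in>X. j (c x) = x} = card {y\<in>X. h y = y}" using E cc(1) by simp
    finally have F: "real (card {P \<in> (\<lambda>x. {x, j x}) ` X. c ` P = P})
      = (real (card {x\<in>X. c x = x}) + real (card {y\<in>X. h y = y})) / 2" .
    have N1: "nu_quot T j ((i \<circ> j) ^^ l) = card {P \<in> (\<lambda>x. {x, j x}) ` X. c ` P = P}"
      unfolding nu_quot_def quot_points_def X_def c_def r_def ..
    have N2: "nu T h = card {y\<in>X. h y = y}" unfolding nu_def X_def ..
    have N3: "nu T ((i \<circ> j) ^^ l) = card {x\<in>X. c x = x}" unfolding nu_def X_def c_def r_def ..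
    show ?thesis unfolding N1 N2 N3 F by (simp only: add.commute)
  qed
  show ?thesis
  proof (intro conjI impI)
    assume "odd l"
    then obtain m where "l = 2 * m + 1" by (rule oddE)
    then have lm: "l = m + Suc m" by simp
    have rl: "r ^^ l = r ^^ m \<circ> (r \<circ> r ^^ m)"
      unfolding lm by (simp only: funpow_add funpow.simps(2))
    show "real (nu_quot T j ((i \<circ> j) ^^ l)) = (real (nu T i) + real (nu T ((i \<circ> j) ^^ l))) / 2"
    proof (rule key[where g="j \<circ> r ^^ m" and g'="s ^^ m \<circ> j"])
      show "\<forall>x\<in>X. (j \<circ> r ^^ m) x \<in> X" using rX jX by simp
      show "\<forall>x\<in>X. (s ^^ m \<circ> j) x \<in> X" using sX jX by simp
      show "\<forall>x\<in>X. (s ^^ m \<circ> j) ((j \<circ> r ^^ m) x) = x" using sr jj rX by simp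
      show "\<forall>x\<in>X. (j \<circ> r ^^ m) ((s ^^ m \<circ> j) x) = x" using rs' jj sX jX by simp
      show "\<forall>x\<in>X. i x \<in> X" by (rule iX)
      show "\<forall>x\<in>X. j (c x) = (s ^^ m \<circ> j) (i ((j \<circ> r ^^ m) x))"
      proof
        fix x assume x: "x \<in> X"
        have "j (c x) = j ((r ^^ m) (r ((r ^^ m) x)))" by (simp add: c_def rl)
        also have "\<dots> = (s ^^ m) (j (r ((r ^^ m) x)))"
        proof -
          have y: "r ((r ^^ m) x) \<in> X" using rX iX jX x by (simp add: r_def)
          show ?thesis by (rule bspec[OF comm y])
        qed
        also have "\<dots> = (s ^^ m \<circ> j) (i ((j \<circ> r ^^ m) x))" by (simp add: r_def)
        finally show "j (c x) = (s ^^ m \<circ> j) (i ((j \<circ> r ^^ m) x))" .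
      qed
    qed (use hi i_nonid in auto)
  next
    assume "even l"
    then obtain m where "l = 2 * m" by (rule evenE)
    then have lm: "l = m + m" by simp
    have rl: "r ^^ l = r ^^ m \<circ> r ^^ m" unfolding lm by (simp only: funpow_add)
    show "real (nu_quot T j ((i \<circ> j) ^^ l)) = (real (nu T j) + real (nu T ((i \<circ> j) ^^ l))) / 2"
    proof (rule key[where g="r ^^ m" and g'="s ^^ m"])
      show "\<forall>x\<in>X. (r ^^ m) x \<in> X" using rX by simp
      show "\<forall>x\<in>X. (s ^^ m) x \<in> X" using sX by simp
      show "\<forall>x\<in>X. (s ^^ m) ((r ^^ m) x) = x" using sr by simp
      show "\<forall>x\<in>X. (r ^^ m) ((s ^^ m) x) = x" using rs' by simp
      show "\<forall>x\<in>X. j x \<in> X" by (rule jX)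
      show "\<forall>x\<in>X. j (c x) = (s ^^ m) (j ((r ^^ m) x))"
      proof
        fix x assume x: "x \<in> X"
        have "j (c x) = j ((r ^^ m) ((r ^^ m) x))" by (simp add: c_def rl)
        also have "\<dots> = (s ^^ m) (j ((r ^^ m) x))" using comm rX x by simp
        finally show "j (c x) = (s ^^ m) (j ((r ^^ m) x))" .
      qed
    qed (use hj j_nonid in auto)
  qed
qed


end
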